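(* Let $T_1$ and $T_2$ be trees with $\gamma_P(T_1) = \gamma(T_1)$ and $\gamma_P(T_2) = \gamma(T_2)$. Then $\gamma_P(T_1 \Box T_2) \ge \gamma_P(T_1)\gamma_P(T_2)$.
   Context: $\gamma(G)$ denotes the domination number of $G$ (minimum size of a set $D$ with $N[D]=V(G)$). For $S \subseteq V(G)$: initially all vertices of $S$ and their neighbors are observed; then, repeatedly, any vertex that is the only unobserved neighbor of some observed vertex becomes observed. $S$ is a power dominating set if eventually all vertices are observed; $\gamma_P(G)$ is the minimum size of a power dominating set. The Cartesian product $G \Box H$ has vertex set $V(G)\times V(H)$, with $(g_1,h_1)$ adjacent to $(g_2,h_2)$ iff either $g_1=g_2$ and $h_1h_2 \in E(H)$, or $h_1=h_2$ and $g_1g_2\in E(G)$. *)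

theory Defs
  imports Main
begin

record 'a graph =
  verts :: "'a set"
  adj :: "'a \<Rightarrow> 'a \<Rightarrow> bool"

definition graph :: "'a graph \<Rightarrow> bool" where
  "graph G \<longleftrightarrow> finite (verts G) \<and>
     (\<forall>u v. adj G u v \<longrightarrow> u \<in> verts G \<and> v \<in> verts G) \<and>
     (\<forall>u v. adj G u v \<longrightarrow> adj G v u) \<and> (\<forall>v. \<not> adj G v v)"

definition nbhd :: "'a graph \<Rightarrow> 'a \<Rightarrow> 'a set" where
  "nbhd G v = {u \<in> verts G. adj G v u}"

definition closed_nbhd_set :: "'a graph \<Rightarrow> 'a set \<Rightarrow> 'a set" where
  "closed_nbhd_set G S = S \<union> {u \<in> verts G. \<exists>v\<in>S. adj G v u}"

definition is_walk :: "'a graph \<Rightarrow> 'a list \<Rightarrow> bool" where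
  "is_walk G xs \<longleftrightarrow> xs \<noteq> [] \<and> set xs \<subseteq> verts G \<and>
     (\<forall>i. Suc i < length xs \<longrightarrow> adj G (xs ! i) (xs ! Suc i))"

definition connected :: "'a graph \<Rightarrow> bool" where
  "connected G \<longleftrightarrow> verts G \<noteq> {} \<and>
     (\<forall>u\<in>verts G. \<forall>v\<in>verts G. \<exists>xs. is_walk G xs \<and> hd xs = u \<and> last xs = v)"

definition is_cycle :: "'a graph \<Rightarrow> 'a list \<Rightarrow> bool" where
  "is_cycle G xs \<longleftrightarrow> is_walk G xs \<and> length xs \<ge> 3 \<and> distinct xs \<and> adj G (last xs) (hd xs)"

definition tree :: "'a graph \<Rightarrow> bool" where
  "tree G \<longleftrightarrow> graph G \<and> connected G \<and> (\<nexists>xs. is_cycle G xs)"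

definition dominating_set :: "'a graph \<Rightarrow> 'a set \<Rightarrow> bool" where
  "dominating_set G D \<longleftrightarrow> D \<subseteq> verts G \<and> closed_nbhd_set G D = verts G"

definition domination_number :: "'a graph \<Rightarrow> nat" where
  "domination_number G = (LEAST k. \<exists>D. dominating_set G D \<and> card D = k)"

inductive_set observed :: "'a graph \<Rightarrow> 'a set \<Rightarrow> 'a set" for G S where
  init: "v \<in> closed_nbhd_set G S \<Longrightarrow> v \<in> verts G \<Longrightarrow> v \<in> observed G S"
| propagate: "u \<in> observed G S \<Longrightarrow> v \<in> nbhd G u \<Longrightarrow>
         (\<forall>w \<in> nbhd G u. w \<noteq> v \<longrightarrow> w \<in> observed G S) \<Longrightarrow> v \<in> observed G S"

definition power_dominating_set :: "'a graph \<Rightarrow> 'a set \<Rightarrow> bool" where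
  "power_dominating_set G S \<longleftrightarrow> S \<subseteq> verts G \<and> observed G S = verts G"

definition power_domination_number :: "'a graph \<Rightarrow> nat" where
  "power_domination_number G = (LEAST k. \<exists>S. power_dominating_set G S \<and> card S = k)"

definition cart_prod :: "'a graph \<Rightarrow> 'b graph \<Rightarrow> ('a \<times> 'b) graph" where
  "cart_prod G H = \<lparr> verts = verts G \<times> verts H,
     adj = (\<lambda>(g1, h1) (g2, h2).
        g1 \<in> verts G \<and> g2 \<in> verts G \<and> h1 \<in> verts H \<and> h2 \<in> verts H \<and>
        ((g1 = g2 \<and> adj H h1 h2) \<or> (h1 = h2 \<and> adj G g1 g2))) \<rparr>"

end

theory Submission
  imports Defs
begin

definition fort :: "'a graph \<Rightarrow> 'a set \<Rightarrow> bool" where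
  "fort G F \<longleftrightarrow> F \<noteq> {} \<and> F \<subseteq> verts G \<and>
     (\<forall>x\<in>verts G. x \<notin> F \<longrightarrow> (\<forall>v\<in>F. adj G x v \<longrightarrow> (\<exists>w\<in>F. w \<noteq> v \<and> adj G x w)))"

definition fpack :: "'a graph \<Rightarrow> 'a set set \<Rightarrow> bool" where
  "fpack G A \<longleftrightarrow> finite A \<and> (\<forall>F\<in>A. fort G F) \<and>
     (\<forall>F\<in>A. \<forall>F'\<in>A. F \<noteq> F' \<longrightarrow> closed_nbhd_set G F \<inter> closed_nbhd_set G F' = {})"

lemma observed_sub: "x \<in> observed G S \<Longrightarrow> x \<in> verts G"
proof (induction rule: observed.induct)
  case (init v) from init.hyps(2) show ?case .
next
  case (propagate u v) from propagate.hyps(2) show ?case unfolding nbhd_def by blast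
qed

lemma fort_hit:
  assumes g: "graph G" and S: "power_dominating_set G S" and F: "fort G F"
  shows "\<exists>s\<in>S. s \<in> closed_nbhd_set G F"
proof (rule ccontr)
  assume nh: "\<not> ?thesis"
  have sym: "\<And>a b. adj G a b \<Longrightarrow> adj G b a" and inV: "\<And>a b. adj G a b \<Longrightarrow> a \<in> verts G \<and> b \<in> verts G"
    using g unfolding graph_def by blast+
  have Fsub: "F \<subseteq> verts G" and Fne: "F \<noteq> {}"
    and Fp: "\<And>x v. x \<in> verts G \<Longrightarrow> x \<notin> F \<Longrightarrow> v \<in> F \<Longrightarrow> adj G x v \<Longrightarrow> \<exists>w\<in>F. w \<noteq> v \<and> adj G x w"
    using F unfolding fort_def by blast+
  have inS: "s \<notin> closed_nbhd_set G F" if "s \<in> S" for s using nh that by blast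
  have "x \<in> observed G S \<Longrightarrow> x \<notin> F" for x
  proof (induction rule: observed.induct)
    case (init v)
    show ?case
    proof
      assume vF: "v \<in> F"
      have "v \<in> S \<or> (\<exists>s\<in>S. adj G s v)" using init(1) unfolding closed_nbhd_set_def by blast
      then show False
      proof
        assume "v \<in> S"
        moreover have "v \<in> closed_nbhd_set G F" using vF unfolding closed_nbhd_set_def by blast
        ultimately show False using inS by blast
      next
        assume "\<exists>s\<in>S. adj G s v"
        then obtain s where s: "s \<in> S" "adj G s v" by blast
        have "s \<in> verts G" "adj G v s" using inV[OF s(2)] sym[OF s(2)] by auto
        then have "s \<in> closed_nbhd_set G F" using vF unfolding closed_nbhd_set_def by blast
        then show False using inS s(1) by blast
      qed
    qed
  next
    case (propagate u v)
    show ?case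
    proof
      assume vF: "v \<in> F"
      have uV: "u \<in> verts G" using propagate.hyps(1) by (rule observed_sub)
      have uv: "adj G u v" using propagate.hyps(2) unfolding nbhd_def by simp
      obtain w where w: "w \<in> F" "w \<noteq> v" "adj G u w"
        using Fp[OF uV propagate.IH(1) vF uv] by blast
      have "w \<in> nbhd G u" using w(3) inV[OF w(3)] unfolding nbhd_def by simp
      then have "w \<notin> F" using propagate.IH(2) w(2) by blast
      then show False using w(1) by blast
    qed
  qed
  moreover obtain v where "v \<in> F" using Fne by blast
  moreover have "v \<in> observed G S" using \<open>v \<in> F\<close> Fsub S unfolding power_dominating_set_def by blast
  ultimately show False by blast
qed

lemma pds_exists: "graph G \<Longrightarrow> power_dominating_set G (verts G)"
  unfolding power_dominating_set_def
proof (intro conjI subset_antisym subsetI)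
  fix x assume "x \<in> observed G (verts G)" thus "x \<in> verts G" by (rule observed_sub)
next
  fix x assume x: "x \<in> verts G"
  then have "x \<in> closed_nbhd_set G (verts G)" unfolding closed_nbhd_set_def by blast
  thus "x \<in> observed G (verts G)" using x by (rule observed.init)
qed simp

lemma pdn_attained:
  assumes "graph G"
  shows "\<exists>S. power_dominating_set G S \<and> card S = power_domination_number G"
  unfolding power_domination_number_def
  by (rule LeastI_ex) (use pds_exists[OF assms] in blast)

lemma pdn_le: "power_dominating_set G S \<Longrightarrow> power_domination_number G \<le> card S"
  unfolding power_domination_number_def by (rule Least_le) blast

lemma pack_le:
  assumes g: "graph G" and P: "fpack G A"
  shows "card A \<le> power_domination_number G"
proof -
  obtain S where S: "power_dominating_set G S" "card S = power_domination_number G"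
    using pdn_attained[OF g] by blast
  have SV: "S \<subseteq> verts G" using S(1) unfolding power_dominating_set_def by blast
  have fV: "finite (verts G)" using g unfolding graph_def by blast
  have fS: "finite S" using finite_subset[OF SV fV] .
  have fA: "\<forall>F\<in>A. fort G F" and dj: "\<forall>F\<in>A. \<forall>F'\<in>A. F \<noteq> F' \<longrightarrow> closed_nbhd_set G F \<inter> closed_nbhd_set G F' = {}"
    using P unfolding fpack_def by blast+
  have "\<forall>F\<in>A. \<exists>s. s \<in> S \<and> s \<in> closed_nbhd_set G F"
    using fort_hit[OF g S(1)] fA by blast
  then obtain f where f: "\<forall>F\<in>A. f F \<in> S \<and> f F \<in> closed_nbhd_set G F"
    by (rule bchoice[elim_format]) blast
  have "inj_on f A"
  proof (rule inj_onI)
    fix F F' assume FF: "F \<in> A" "F' \<in> A" "f F = f F'"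
    show "F = F'"
    proof (rule ccontr)
      assume "F \<noteq> F'"
      then have "closed_nbhd_set G F \<inter> closed_nbhd_set G F' = {}" using dj FF by blast
      moreover have "f F \<in> closed_nbhd_set G F" "f F \<in> closed_nbhd_set G F'" using f FF by auto
      ultimately show False by blast
    qed
  qed
  moreover have "f ` A \<subseteq> S" using f by auto
  ultimately have "card A \<le> card S" using card_inj_on_le fS by blast
  thus ?thesis using S by simp
qed

lemma graph_prod: "graph G \<Longrightarrow> graph H \<Longrightarrow> graph (cart_prod G H)"
  unfolding graph_def cart_prod_def by auto

lemma fort_prod:
  assumes "fort G F" "fort H F'"
  shows "fort (cart_prod G H) (F \<times> F')"
proof -
  have *: "(\<forall>x\<in>verts G. x \<notin> F \<longrightarrow> (\<forall>v\<in>F. adj G x v \<longrightarrow> (\<exists>w\<in>F. w \<noteq> v \<and> adj G x w)))"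
    "(\<forall>x\<in>verts H. x \<notin> F' \<longrightarrow> (\<forall>v\<in>F'. adj H x v \<longrightarrow> (\<exists>w\<in>F'. w \<noteq> v \<and> adj H x w)))"
    using assms unfolding fort_def by auto
  have sub: "F \<subseteq> verts G" "F' \<subseteq> verts H" using assms unfolding fort_def by auto
  show ?thesis
    unfolding fort_def
  proof (intro conjI ballI impI)
    show "F \<times> F' \<noteq> {}" using assms unfolding fort_def by auto
    show "F \<times> F' \<subseteq> verts (cart_prod G H)" using sub by (auto simp: cart_prod_def)
  next
    fix x v assume x: "x \<in> verts (cart_prod G H)" "x \<notin> F \<times> F'" and v: "v \<in> F \<times> F'"
      and a: "adj (cart_prod G H) x v"
    obtain g h where xe: "x = (g,h)" by fastforce
    obtain g' h' where ve: "v = (g',h')" by fastforce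
    have gh: "g \<in> verts G" "h \<in> verts H" "g' \<in> verts G" "h' \<in> verts H"
      and c: "(g = g' \<and> adj H h h') \<or> (h = h' \<and> adj G g g')"
      using a unfolding xe ve cart_prod_def by auto
    from c show "\<exists>w\<in>F \<times> F'. w \<noteq> v \<and> adj (cart_prod G H) x w"
    proof
      assume c1: "g = g' \<and> adj H h h'"
      then have "h \<notin> F'" using x v unfolding xe ve by auto
      then obtain w where "w \<in> F'" "w \<noteq> h'" "adj H h w" using *(2) gh c1 v ve by auto
      then show ?thesis using c1 v gh sub unfolding xe ve cart_prod_def
        by (intro bexI[of _ "(g, w)"]) auto
    next
      assume c1: "h = h' \<and> adj G g g'"
      then have "g \<notin> F" using x v unfolding xe ve by auto
      then obtain w where "w \<in> F" "w \<noteq> g'" "adj G g w" using *(1) gh c1 v ve by auto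
      then show ?thesis using c1 v gh sub unfolding xe ve cart_prod_def
        by (intro bexI[of _ "(w, h)"]) auto
    qed
  qed
qed

lemma cn_prod:
  assumes "F \<subseteq> verts G" "F' \<subseteq> verts H"
  shows "closed_nbhd_set (cart_prod G H) (F \<times> F') \<subseteq> closed_nbhd_set G F \<times> closed_nbhd_set H F'"
  using assms unfolding closed_nbhd_set_def cart_prod_def by auto

lemma pack_prod:
  assumes A: "fpack G A" and B: "fpack H B"
  shows "fpack (cart_prod G H) ((\<lambda>(F,F'). F \<times> F') ` (A \<times> B))"
    and "card ((\<lambda>(F,F'). F \<times> F') ` (A \<times> B)) = card A * card B"
proof -
  have fA: "\<forall>F\<in>A. fort G F" and fB: "\<forall>F\<in>B. fort H F" using A B unfolding fpack_def by auto
  have inj: "inj_on (\<lambda>(F,F'). F \<times> F') (A \<times> B)"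
  proof (rule inj_onI, clarify)
    fix F F' E E' assume "F \<in> A" "F' \<in> B" "E \<in> A" "E' \<in> B" "F \<times> F' = E \<times> E'"
    moreover have "F \<noteq> {}" "F' \<noteq> {}" using \<open>F \<in> A\<close> \<open>F' \<in> B\<close> fA fB unfolding fort_def by auto
    ultimately show "F = E \<and> F' = E'" by (simp add: times_eq_iff)
  qed
  show "card ((\<lambda>(F,F'). F \<times> F') ` (A \<times> B)) = card A * card B"
    using card_image[OF inj] by (simp add: card_cartesian_product)
  show "fpack (cart_prod G H) ((\<lambda>(F,F'). F \<times> F') ` (A \<times> B))"
    unfolding fpack_def
  proof (intro conjI ballI impI)
    have "finite A" "finite B" using A B unfolding fpack_def by blast+
    then show "finite ((\<lambda>(F,F'). F \<times> F') ` (A \<times> B))" by simp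
  next
    fix P assume "P \<in> (\<lambda>(F,F'). F \<times> F') ` (A \<times> B)"
    then obtain F F' where "P = F \<times> F'" "F \<in> A" "F' \<in> B" by auto
    then show "fort (cart_prod G H) P" using fort_prod[of G F H F'] fA fB by simp
  next
    fix P Q assume "P \<in> (\<lambda>(F,F'). F \<times> F') ` (A \<times> B)" "Q \<in> (\<lambda>(F,F'). F \<times> F') ` (A \<times> B)" "P \<noteq> Q"
    then obtain F F' E E' where e: "P = F \<times> F'" "F \<in> A" "F' \<in> B" "Q = E \<times> E'" "E \<in> A" "E' \<in> B"
      by auto
    have subs: "F \<subseteq> verts G" "F' \<subseteq> verts H" "E \<subseteq> verts G" "E' \<subseteq> verts H"
      using e fA fB unfolding fort_def by auto
    have djA: "\<forall>F\<in>A. \<forall>F'\<in>A. F \<noteq> F' \<longrightarrow> closed_nbhd_set G F \<inter> closed_nbhd_set G F' = {}"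
      using A unfolding fpack_def by blast
    have djB: "\<forall>F\<in>B. \<forall>F'\<in>B. F \<noteq> F' \<longrightarrow> closed_nbhd_set H F \<inter> closed_nbhd_set H F' = {}"
      using B unfolding fpack_def by blast
    have "F \<noteq> E \<or> F' \<noteq> E'" using e \<open>P \<noteq> Q\<close> by auto
    then have dd: "closed_nbhd_set G F \<inter> closed_nbhd_set G E = {} \<or>
               closed_nbhd_set H F' \<inter> closed_nbhd_set H E' = {}"
    proof
      assume "F \<noteq> E" thus ?thesis using djA e by blast
    next
      assume "F' \<noteq> E'" thus ?thesis using djB e by blast
    qed
    have c1: "closed_nbhd_set (cart_prod G H) P \<subseteq> closed_nbhd_set G F \<times> closed_nbhd_set H F'"
      using cn_prod[OF subs(1,2)] e(1) by simp
    have c2: "closed_nbhd_set (cart_prod G H) Q \<subseteq> closed_nbhd_set G E \<times> closed_nbhd_set H E'"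
      using cn_prod[OF subs(3,4)] e(4) by simp
    have "(closed_nbhd_set G F \<times> closed_nbhd_set H F') \<inter> (closed_nbhd_set G E \<times> closed_nbhd_set H E') = {}"
      using dd by blast
    then show "closed_nbhd_set (cart_prod G H) P \<inter> closed_nbhd_set (cart_prod G H) Q = {}"
      using c1 c2 by blast
  qed
qed

lemma conn_closed:
  assumes c: "connected G" and cl: "\<forall>u w. u \<in> C \<longrightarrow> adj G u w \<longrightarrow> w \<in> C"
    and cC: "c \<in> C" "c \<in> verts G"
  shows "verts G \<subseteq> C"
proof
  fix v assume "v \<in> verts G"
  then obtain xs where xs: "is_walk G xs" "hd xs = c" "last xs = v"
    using c cC unfolding connected_def by blast
  have ne: "xs \<noteq> []" using xs unfolding is_walk_def by auto
  have all: "i < length xs \<Longrightarrow> xs ! i \<in> C" for i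
  proof (induction i)
    case 0 thus ?case using xs(2) cC ne by (simp add: hd_conv_nth)
  next
    case (Suc i)
    thus ?case using xs(1) cl unfolding is_walk_def by auto
  qed
  have "v = xs ! (length xs - 1)" using xs(3) ne by (simp add: last_conv_nth)
  moreover have "length xs - 1 < length xs" using ne by simp
  ultimately show "v \<in> C" using all by simp
qed

lemma no_tri:
  assumes "tree G" "adj G a b" "adj G b c" "a \<noteq> c"
  shows "\<not> adj G c a"
proof
  assume ca: "adj G c a"
  have g: "graph G" using assms unfolding tree_def by auto
  have V: "a \<in> verts G" "b \<in> verts G" "c \<in> verts G" using g assms unfolding graph_def by blast+
  have irr: "\<And>x. \<not> adj G x x" using g unfolding graph_def by blast
  have ne: "a \<noteq> b" "b \<noteq> c"
    using irr assms(2) apply blast using irr assms(3) by blast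
  have st: "\<forall>i. Suc i < length [a,b,c] \<longrightarrow> adj G ([a,b,c] ! i) ([a,b,c] ! Suc i)"
  proof (intro allI impI)
    fix i assume "Suc i < length [a,b,c]"
    then have "i = 0 \<or> i = 1" by auto
    then show "adj G ([a,b,c] ! i) ([a,b,c] ! Suc i)" using assms by auto
  qed
  have "is_cycle G [a,b,c]"
    unfolding is_cycle_def is_walk_def using st V ne assms(4) ca by simp
  thus False using assms(1) unfolding tree_def by blast
qed

lemma no_sq:
  assumes "tree G" "adj G a b" "adj G b c" "adj G c d" "a \<noteq> c" "b \<noteq> d"
  shows "\<not> adj G d a"
proof
  assume da: "adj G d a"
  have g: "graph G" using assms unfolding tree_def by auto
  have V: "a \<in> verts G" "b \<in> verts G" "c \<in> verts G" "d \<in> verts G"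
    using g assms unfolding graph_def by blast+
  have irr: "\<And>x. \<not> adj G x x" using g unfolding graph_def by blast
  have ne: "a \<noteq> b" "b \<noteq> c" "c \<noteq> d" "a \<noteq> d"
    using irr assms(2) apply blast using irr assms(3) apply blast
    using irr assms(4) apply blast using irr da by blast
  have st: "\<forall>i. Suc i < length [a,b,c,d] \<longrightarrow> adj G ([a,b,c,d] ! i) ([a,b,c,d] ! Suc i)"
  proof (intro allI impI)
    fix i assume "Suc i < length [a,b,c,d]"
    then have "i = 0 \<or> i = 1 \<or> i = 2" by auto
    then show "adj G ([a,b,c,d] ! i) ([a,b,c,d] ! Suc i)" using assms by auto
  qed
  have "is_cycle G [a,b,c,d]"
    unfolding is_cycle_def is_walk_def using st V ne assms(5,6) da by simp
  thus False using assms(1) unfolding tree_def by blast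
qed

definition leafnb :: "'a graph \<Rightarrow> 'a \<Rightarrow> 'a \<Rightarrow> bool" where
  "leafnb G d l \<longleftrightarrow> adj G d l \<and> (\<forall>z. adj G l z \<longrightarrow> z = d)"

lemma remove_pds:
  assumes t: "tree G" and D: "dominating_set G D" and d: "d \<in> D"
    and uniq: "\<forall>l1 l2. leafnb G d l1 \<and> leafnb G d l2 \<longrightarrow> l1 = l2"
    and y: "adj G d y" "adj G y z0" "z0 \<noteq> d"
  shows "power_dominating_set G (D - {d})"
proof -
  have g: "graph G" using t unfolding tree_def by auto
  have sym: "\<And>a b. adj G a b \<Longrightarrow> adj G b a" and inV: "\<And>a b. adj G a b \<Longrightarrow> a \<in> verts G \<and> b \<in> verts G"
    and irr: "\<And>a. \<not> adj G a a"
    using g unfolding graph_def by blast+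
  let ?O = "observed G (D - {d})"
  have f0: "x \<in> ?O" if "x \<in> verts G" "x \<noteq> d" "\<not> adj G d x" for x
  proof -
    have "x \<in> closed_nbhd_set G D" using D that unfolding dominating_set_def by auto
    then have "x \<in> closed_nbhd_set G (D - {d})" using that unfolding closed_nbhd_set_def by auto
    thus ?thesis using that(1) by (rule observed.init)
  qed
  have f1: "e \<in> ?O" if "adj G d e" "adj G e z" "z \<noteq> d" for e z
  proof -
    have "\<not> adj G z d" using no_tri[OF t that(1,2)] that(3) by auto
    then have zd: "\<not> adj G d z" using sym by blast
    have zV: "z \<in> verts G" using inV[OF that(2)] by blast
    have "z \<in> ?O" using zV that(3) zd by (rule f0)
    moreover have "e \<in> nbhd G z" using that sym inV unfolding nbhd_def by blast
    moreover have "\<forall>w\<in>nbhd G z. w \<noteq> e \<longrightarrow> w \<in> ?O"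
    proof (intro ballI impI)
      fix w assume w: "w \<in> nbhd G z" "w \<noteq> e"
      have zw: "adj G z w" using w unfolding nbhd_def by auto
      have wd: "w \<noteq> d" using zd zw sym by blast
      have "\<not> adj G w d" using no_sq[OF t that(1,2) zw] that(3) w(2) by auto
      then have "\<not> adj G d w" using sym by blast
      moreover have "w \<in> verts G" using inV[OF zw] by blast
      ultimately show "w \<in> ?O" using wd by (intro f0)
    qed
    ultimately show ?thesis by (rule observed.propagate)
  qed
  have f2: "d \<in> ?O"
  proof -
    have "y \<in> ?O" using y(1,2,3) by (rule f1)
    moreover have "d \<in> nbhd G y" using y sym inV unfolding nbhd_def by blast
    moreover have "\<forall>w\<in>nbhd G y. w \<noteq> d \<longrightarrow> w \<in> ?O"
    proof (intro ballI impI)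
      fix w assume w: "w \<in> nbhd G y" "w \<noteq> d"
      have yw: "adj G y w" using w unfolding nbhd_def by auto
      have "\<not> adj G w d" using no_tri[OF t y(1) yw] w(2) by auto
      then have "\<not> adj G d w" using sym by blast
      moreover have "w \<in> verts G" using inV[OF yw] by blast
      ultimately show "w \<in> ?O" using w(2) by (intro f0)
    qed
    ultimately show ?thesis by (rule observed.propagate)
  qed
  have f3: "l \<in> ?O" if "adj G d l" for l
  proof (cases "\<exists>z. adj G l z \<and> z \<noteq> d")
    case True then obtain z where "adj G l z" "z \<noteq> d" by blast
    with that show ?thesis by (intro f1)
  next
    case False
    hence ll: "leafnb G d l" using that unfolding leafnb_def by blast
    have "l \<in> nbhd G d" using that inV unfolding nbhd_def by blast
    moreover have "\<forall>w\<in>nbhd G d. w \<noteq> l \<longrightarrow> w \<in> ?O"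
    proof (intro ballI impI)
      fix w assume w: "w \<in> nbhd G d" "w \<noteq> l"
      have dw: "adj G d w" using w unfolding nbhd_def by auto
      show "w \<in> ?O"
      proof (cases "\<exists>z. adj G w z \<and> z \<noteq> d")
        case True then obtain z where "adj G w z" "z \<noteq> d" by blast
        with dw show ?thesis by (intro f1)
      next
        case False
        hence "leafnb G d w" using dw unfolding leafnb_def by blast
        thus ?thesis using uniq ll w(2) by blast
      qed
    qed
    ultimately show ?thesis by (intro observed.propagate[OF f2])
  qed
  have "verts G \<subseteq> ?O"
  proof
    fix x assume "x \<in> verts G"
    show "x \<in> ?O"
    proof (cases "x = d")
      case True thus ?thesis using f2 by simp
    next
      case False
      show ?thesis
      proof (cases "adj G d x")
        case True thus ?thesis by (rule f3)
      next
        case False2: False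
        show ?thesis using \<open>x \<in> verts G\<close> False False2 by (rule f0)
      qed
    qed
  qed
  moreover have "?O \<subseteq> verts G"
  proof
    fix x assume "x \<in> ?O" thus "x \<in> verts G" by (rule observed_sub)
  qed
  moreover have "D - {d} \<subseteq> verts G" using D unfolding dominating_set_def by auto
  ultimately show ?thesis unfolding power_dominating_set_def by blast
qed

lemma dn_attained:
  assumes "graph G"
  shows "\<exists>D. dominating_set G D \<and> card D = domination_number G"
proof -
  have ds: "dominating_set G (verts G)"
    using assms unfolding dominating_set_def closed_nbhd_set_def graph_def by auto
  show ?thesis unfolding domination_number_def
    by (rule LeastI_ex) (use ds in blast)
qed

lemma tree_pack:
  assumes t: "tree T" and eq: "power_domination_number T = domination_number T"
  shows "\<exists>A. fpack T A \<and> power_domination_number T \<le> card A"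
proof -
  have g: "graph T" using t unfolding tree_def by auto
  have sym: "\<And>a b. adj T a b \<Longrightarrow> adj T b a" and inV: "\<And>a b. adj T a b \<Longrightarrow> a \<in> verts T \<and> b \<in> verts T"
    and irr: "\<And>a. \<not> adj T a a" and finV: "finite (verts T)"
    using g unfolding graph_def by blast+
  obtain D where D: "dominating_set T D" "card D = domination_number T"
    using dn_attained[OF g] by blast
  have DV: "D \<subseteq> verts T" using D unfolding dominating_set_def by auto
  have finD: "finite D" using DV finV finite_subset by blast
  show ?thesis
  proof (cases "\<forall>d\<in>D. \<exists>l1 l2. l1 \<noteq> l2 \<and> leafnb T d l1 \<and> leafnb T d l2")
    case True
    then obtain f1 where "\<forall>d\<in>D. \<exists>l2. f1 d \<noteq> l2 \<and> leafnb T d (f1 d) \<and> leafnb T d l2"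
      by (rule bchoice[elim_format]) blast
    then obtain f2 where f: "\<forall>d\<in>D. f1 d \<noteq> f2 d \<and> leafnb T d (f1 d) \<and> leafnb T d (f2 d)"
      by (rule bchoice[elim_format]) blast
    have lf: "leafnb T d l \<Longrightarrow> adj T l x \<Longrightarrow> x = d" for d l x unfolding leafnb_def by blast
    have la: "leafnb T d l \<Longrightarrow> adj T d l" for d l unfolding leafnb_def by blast
    have cnsub: "closed_nbhd_set T {f1 d, f2 d} \<subseteq> {f1 d, f2 d, d}" if "d \<in> D" for d
      using f that lf unfolding closed_nbhd_set_def by blast
    have notleaf: "\<not> leafnb T d' d" if "d \<in> D" for d d'
    proof
      assume "leafnb T d' d"
      then have "f1 d = d'" "f2 d = d'" using lf[of d' d] f that la by blast+
      thus False using f that by auto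
    qed
    let ?A = "(\<lambda>d. {f1 d, f2 d}) ` D"
    have inj: "inj_on (\<lambda>d. {f1 d, f2 d}) D"
    proof (rule inj_onI)
      fix d d' assume dd: "d \<in> D" "d' \<in> D" "{f1 d, f2 d} = {f1 d', f2 d'}"
      then have "f1 d = f1 d' \<or> f1 d = f2 d'" by blast
      then have "leafnb T d' (f1 d)" using f dd by auto
      then have "adj T (f1 d) d'" using la sym by blast
      moreover have "leafnb T d (f1 d)" using f dd by auto
      ultimately show "d = d'" using lf by metis
    qed
    have "fpack T ?A"
      unfolding fpack_def
    proof (intro conjI ballI impI)
      show "finite ?A" using finD by simp
    next
      fix F assume "F \<in> ?A"
      then obtain d where dF: "d \<in> D" "F = {f1 d, f2 d}" by auto
      show "fort T F" unfolding fort_def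
      proof (intro conjI ballI impI)
        show "F \<noteq> {}" using dF by simp
        show "F \<subseteq> verts T" using dF f inV la by blast
      next
        fix x v assume "x \<in> verts T" "x \<notin> F" "v \<in> F" "adj T x v"
        then have "x = d" using dF f lf sym by blast
        then show "\<exists>w\<in>F. w \<noteq> v \<and> adj T x w" using dF f la \<open>v \<in> F\<close> by auto
      qed
    next
      fix F F' assume "F \<in> ?A" "F' \<in> ?A" "F \<noteq> F'"
      then obtain d d' where dF: "d \<in> D" "F = {f1 d, f2 d}" "d' \<in> D" "F' = {f1 d', f2 d'}" "d \<noteq> d'"
        by auto
      have L: "leafnb T d (f1 d)" "leafnb T d (f2 d)" "leafnb T d' (f1 d')" "leafnb T d' (f2 d')"
        using f dF(1,3) by auto
      have two: "d1 = d2" if "leafnb T d1 l" "leafnb T d2 l" for d1 d2 l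
        using that lf la sym by blast
      have "x \<notin> {f1 d', f2 d', d'}" if "x \<in> {f1 d, f2 d, d}" for x
      proof -
        have c: "x = f1 d \<or> x = f2 d \<or> x = d" using that by blast
        have n1: "\<not> leafnb T d d'" using notleaf dF(3) by blast
        have n2: "\<not> leafnb T d' d" using notleaf dF(1) by blast
        show ?thesis
        proof
          assume "x \<in> {f1 d', f2 d', d'}"
          then have c': "x = f1 d' \<or> x = f2 d' \<or> x = d'" by blast
          from c c' L dF(5) two n1 n2 show False by metis
        qed
      qed
      then have "{f1 d, f2 d, d} \<inter> {f1 d', f2 d', d'} = {}" by blast
      then show "closed_nbhd_set T F \<inter> closed_nbhd_set T F' = {}"
        using cnsub[OF dF(1)] cnsub[OF dF(3)] dF by blast
    qed
    moreover have "card ?A = power_domination_number T" using card_image[OF inj] D eq by simp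
    ultimately show ?thesis by auto
  next
    case False
    then obtain d where d: "d \<in> D" and uniq: "\<forall>l1 l2. leafnb T d l1 \<and> leafnb T d l2 \<longrightarrow> l1 = l2"
      by blast
    show ?thesis
    proof (cases "\<exists>y z. adj T d y \<and> adj T y z \<and> z \<noteq> d")
      case True
      then obtain y z where "adj T d y" "adj T y z" "z \<noteq> d" by blast
      then have "power_dominating_set T (D - {d})" using remove_pds[OF t D(1) d uniq] by blast
      then have "power_domination_number T \<le> card D - 1" using pdn_le d finD by fastforce
      moreover have "card D \<ge> 1" using d finD card_0_eq by fastforce
      ultimately show ?thesis using D eq by simp
    next
      case False
      let ?C = "{d} \<union> {u \<in> verts T. adj T d u}"
      have conT: "connected T" using t unfolding tree_def by blast
      have cl: "\<forall>u w. u \<in> ?C \<longrightarrow> adj T u w \<longrightarrow> w \<in> ?C"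
      proof (intro allI impI)
        fix u w assume u: "u \<in> ?C" and uw: "adj T u w"
        show "w \<in> ?C"
        proof (cases "u = d")
          case True thus ?thesis using uw inV by blast
        next
          case False2: False
          then have du: "adj T d u" using u by blast
          show ?thesis
          proof (cases "w = d")
            case True thus ?thesis by blast
          next
            case False3: False
            then have "\<exists>y z. adj T d y \<and> adj T y z \<and> z \<noteq> d" using du uw by blast
            then show ?thesis using False by blast
          qed
        qed
      qed
      have dV: "d \<in> verts T" using d DV by blast
      have "verts T \<subseteq> ?C" using conn_closed[OF conT cl] dV by blast
      have "fpack T {verts T}"
        unfolding fpack_def fort_def using d DV by auto
      moreover have "power_dominating_set T {d}"
        unfolding power_dominating_set_def
      proof
        show "{d} \<subseteq> verts T" using d DV by auto
        have "?C = closed_nbhd_set T {d}" unfolding closed_nbhd_set_def by auto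
        then have "verts T \<subseteq> observed T {d}"
        proof (intro subsetI)
          fix x assume "?C = closed_nbhd_set T {d}" "x \<in> verts T"
          then have "x \<in> closed_nbhd_set T {d}" using \<open>verts T \<subseteq> ?C\<close> by blast
          then show "x \<in> observed T {d}" using \<open>x \<in> verts T\<close> by (rule observed.init)
        qed
        moreover have "observed T {d} \<subseteq> verts T"
        proof
          fix x assume "x \<in> observed T {d}" thus "x \<in> verts T" by (rule observed_sub)
        qed
        ultimately show "observed T {d} = verts T" by blast
      qed
      then have "power_domination_number T \<le> 1" using pdn_le by fastforce
      ultimately show ?thesis by (intro exI[of _ "{verts T}"]) auto
    qed
  qed
qed

theorem theorem1p3:
  fixes T1 :: "'a graph" and T2 :: "'b graph"
  assumes "tree T1" and "tree T2"
    and "power_domination_number T1 = domination_number T1"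
    and "power_domination_number T2 = domination_number T2"
  shows "power_domination_number (cart_prod T1 T2)
           \<ge> power_domination_number T1 * power_domination_number T2"
proof -
  obtain A where A: "fpack T1 A" "power_domination_number T1 \<le> card A"
    using tree_pack[OF assms(1,3)] by blast
  obtain B where B: "fpack T2 B" "power_domination_number T2 \<le> card B"
    using tree_pack[OF assms(2,4)] by blast
  have g: "graph (cart_prod T1 T2)" using assms(1,2) graph_prod unfolding tree_def by blast
  have "card A * card B \<le> power_domination_number (cart_prod T1 T2)"
    using pack_le[OF g pack_prod(1)[OF A(1) B(1)]] pack_prod(2)[OF A(1) B(1)] by simp
  moreover have "power_domination_number T1 * power_domination_number T2 \<le> card A * card B"
    using A(2) B(2) by (rule mult_le_mono)
  ultimately show ?thesis by linarith
qed

end
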